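(* For every even integer $k\geq 2$ and every integer $d\geq 1$, there are infinitely many arithmetic progressions $\{a_1, a_2,\dots,a_k\}$ of positive integers of length $k$ and common difference $d$ such that $\sum_{i=1}^{k} \lambda(a_i)=0$, where $\lambda$ is the Liouville function.
   Context: The Liouville function is $\lambda(n)=(-1)^{\Omega(n)}$, where $\Omega(n)$ is the number of prime factors of $n$ counted with multiplicity. *)

theory Defs
  imports "HOL-Computational_Algebra.Primes"
begin

definition bigOmega :: "nat \<Rightarrow> nat" where
  "bigOmega n = size (prime_factorization n)"

definition liouville :: "nat \<Rightarrow> int" where
  "liouville n = (-1) ^ bigOmega n"

end

theory Submission imports Defs "HOL-Analysis.Harmonic_Numbers"
begin

lemma lam_mult: "a > 0 \<Longrightarrow> b > 0 \<Longrightarrow> liouville (a*b) = liouville a * liouville b"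
  unfolding liouville_def bigOmega_def by (simp add: prime_factorization_mult power_add)

lemma lam_1: "liouville 1 = 1"
  unfolding liouville_def bigOmega_def by simp

lemma lam_pow: "prime p \<Longrightarrow> liouville (p^i) = (-1)^i"
  unfolding liouville_def bigOmega_def by (simp add: prime_factorization_prime_power)

lemma lam_pm: "liouville n = 1 \<or> liouville n = -1"
  unfolding liouville_def by (cases "even (bigOmega n)") auto

lemma pow_mult_inj_aux:
  fixes p :: nat
  assumes "prime p" "\<not> p dvd s" "p^i * s = p^j * t" "i < j"
  shows False
proof -
  have "p^j = p^i * p^(j-i)" using assms(4) by (simp flip: power_add)
  then have "p^i * s = p^i * (p^(j-i)*t)" by (metis assms(3) mult.assoc)
  then have "s = p^(j-i)*t" using prime_gt_0_nat[OF assms(1)] by auto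
  moreover have "p dvd p^(j-i)" using assms(4) by (simp add: dvd_power)
  ultimately show False using assms(2) by simp
qed

lemma pow_mult_inj:
  fixes p :: nat
  assumes "prime p" "\<not> p dvd s" "\<not> p dvd t" "p^i * s = p^j * t"
  shows "i = j \<and> s = t"
proof -
  have "i = j"
    using pow_mult_inj_aux[OF assms(1,2,4)] pow_mult_inj_aux[OF assms(1,3) assms(4)[symmetric]]
    by (meson linorder_neqE_nat)
  with assms(4) assms(1) show ?thesis by (simp add: prime_gt_0_nat)
qed

lemma divisors_decomp:
  fixes p r :: nat
  assumes "prime p" "\<not> p dvd r"
  shows "{n. n dvd p^e * r} = (\<lambda>(i,s). p^i * s) ` ({..e} \<times> {s. s dvd r})"
proof (rule set_eqI, rule iffI)
  fix n assume "n \<in> {n. n dvd p^e * r}"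
  then have "n dvd p^e * r" by simp
  then obtain x y where "n = x*y" "x dvd p^e" "y dvd r" by (rule dvd_productE)
  then obtain i where "i \<le> e" "x = p^i" using divides_primepow_nat[OF assms(1)] by auto
  then show "n \<in> (\<lambda>(i,s). p^i * s) ` ({..e} \<times> {s. s dvd r})"
    using \<open>n = x*y\<close> \<open>y dvd r\<close> by force
next
  fix n assume "n \<in> (\<lambda>(i,s). p^i * s) ` ({..e} \<times> {s. s dvd r})"
  then obtain i s where "i \<le> e" "s dvd r" "n = p^i * s" by auto
  then show "n \<in> {n. n dvd p^e * r}"
    by (simp add: le_imp_power_dvd mult_dvd_mono)
qed

lemma divisors_inj:
  fixes p r :: nat
  assumes "prime p" "\<not> p dvd r"
  shows "inj_on (\<lambda>(i,s). p^i * s) ({..e} \<times> {s. s dvd r})"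
proof (rule inj_onI, clarify)
  fix i s j t
  assume "s dvd r" "t dvd r" "p^i * s = p^j * t"
  moreover have "\<not> p dvd s" "\<not> p dvd t" using assms(2) \<open>s dvd r\<close> \<open>t dvd r\<close> dvd_trans by blast+
  ultimately show "i = j \<and> s = t" using pow_mult_inj[OF assms(1)] by blast
qed

definition D :: "nat \<Rightarrow> int" where "D j = (\<Sum>n\<in>{n. n dvd j}. liouville n)"

lemma alt_sum': "(\<Sum>i\<le>e. (-1::int)^i) = (if even e then 1 else 0)"
  by (induction e) auto

lemma alt_sum: "(\<Sum>i\<le>e. (-1::int)^i) = 0 \<or> (\<Sum>i\<le>e. (-1::int)^i) = 1"
  by (simp add: alt_sum')

lemma D_decomp:
  fixes p r :: nat
  assumes "prime p" "\<not> p dvd r" "r > 0"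
  shows "D (p^e * r) = (\<Sum>i\<le>e. (-1::int)^i) * D r"
proof -
  have "D (p^e * r) = (\<Sum>(i,s)\<in>{..e} \<times> {s. s dvd r}. liouville (p^i * s))"
    unfolding D_def divisors_decomp[OF assms(1,2)] sum.reindex[OF divisors_inj[OF assms(1,2)]]
    by (intro sum.cong) auto
  also have "\<dots> = (\<Sum>i\<le>e. \<Sum>s\<in>{s. s dvd r}. liouville (p^i * s))"
    by (simp add: sum.cartesian_product)
  also have "\<dots> = (\<Sum>i\<le>e. \<Sum>s\<in>{s. s dvd r}. (-1)^i * liouville s)"
  proof (intro sum.cong refl)
    fix i s assume "s \<in> {s. s dvd r}"
    then have "s > 0" using assms(3) by (auto intro: Nat.gr0I)
    then show "liouville (p^i * s) = (-1)^i * liouville s"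
      using lam_mult[of "p^i" s] lam_pow[OF assms(1)] assms(1) by (simp add: prime_gt_0_nat)
  qed
  also have "\<dots> = (\<Sum>i\<le>e. (-1::int)^i) * D r"
    by (simp only: D_def sum_distrib_right sum_distrib_left) (rule sum.swap)
  finally show ?thesis .
qed

lemma D_01: "j > 0 \<Longrightarrow> D j = 0 \<or> D j = 1"
proof (induction j rule: less_induct)
  case (less j)
  show ?case
  proof (cases "j = 1")
    case True
    then have "{n. n dvd j} = {1}" by auto
    then show ?thesis using lam_1 by (simp add: D_def)
  next
    case False
    then obtain p where p: "prime p" "p dvd j" using prime_factor_nat by blast
    have jp: "j \<noteq> 0" "\<not> is_unit p" using less.prems p(1) not_prime_unit by auto
    obtain r where r: "j = p ^ multiplicity p j * r" "\<not> p dvd r"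
      by (rule multiplicity_decompose'[OF jp])
    define e where "e = multiplicity p j"
    have rj: "j = p^e * r" using r(1) unfolding e_def .
    have "r > 0" using rj less.prems by (auto intro: Nat.gr0I)
    have "e \<noteq> 0"
    proof
      assume "e = 0"
      then have "j = r" using rj by simp
      then show False using p(2) r(2) by simp
    qed
    have "p^e > 1" using one_less_power[OF prime_gt_1_nat[OF p(1)]] \<open>e \<noteq> 0\<close> by blast
    have "r * 1 < r * p^e" by (rule mult_less_mono2[OF \<open>p^e > 1\<close> \<open>r > 0\<close>])
    then have "r < j" using rj by (simp add: mult.commute)
    then have "D r = 0 \<or> D r = 1" using less.IH \<open>r > 0\<close> by blast
    moreover have "D j = (\<Sum>i\<le>e. (-1::int)^i) * D r"
      using D_decomp[OF p(1) r(2) \<open>r>0\<close>] rj by simp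
    ultimately show ?thesis using alt_sum[of e] by auto
  qed
qed

definition L :: "nat \<Rightarrow> int" where "L y = (\<Sum>n\<in>{1..y}. liouville n)"

lemma L_0: "L 0 = 0" by (simp add: L_def)

lemma L_Suc: "L (Suc y) = L y + liouville (Suc y)"
  by (simp add: L_def)

lemma L_step:
  assumes "q > 0"
  shows "L (Suc x div q) = L (x div q) + (if q dvd Suc x then liouville (Suc x div q) else 0)"
proof (cases "q dvd Suc x")
  case True
  then have "Suc x div q = Suc (x div q)" using div_Suc[of x q] by (simp add: dvd_eq_mod_eq_0)
  then show ?thesis using True L_Suc by simp
next
  case False
  then have "Suc x div q = x div q" using div_Suc[of x q] by (simp add: dvd_eq_mod_eq_0)
  then show ?thesis using False by simp
qed

lemma div_div_self: "b dvd (j::nat) \<Longrightarrow> j > 0 \<Longrightarrow> j div (j div b) = b"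
  by (auto elim!: dvdE)

lemma D_alt:
  assumes "j > 0"
  shows "D j = (\<Sum>q\<in>{q. q dvd j}. liouville (j div q))"
  unfolding D_def
proof (rule sum.reindex_bij_witness[where i="\<lambda>q. j div q" and j="\<lambda>q. j div q"])
  fix a assume "a \<in> {q. q dvd j}"
  then show "j div (j div a) = a" "j div a \<in> {q. q dvd j}"
    using assms by (auto simp: div_div_self)
qed (use assms div_div_self in auto)

lemma dvd_Suc_range: "q dvd Suc x \<Longrightarrow> q \<in> {1..Suc x}"
  by (cases q) (auto dest: dvd_imp_le)

lemma ident: "(\<Sum>q\<in>{1..x}. L (x div q)) = (\<Sum>j\<in>{1..x}. D j)"
proof (induction x)
  case 0 then show ?case by simp
next
  case (Suc x)
  have "(\<Sum>q\<in>{1..Suc x}. L (Suc x div q)) = (\<Sum>q\<in>{1..Suc x}. L (x div q))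
      + (\<Sum>q\<in>{1..Suc x}. (if q dvd Suc x then liouville (Suc x div q) else 0))"
    by (simp add: L_step sum.distrib)
  also have "(\<Sum>q\<in>{1..Suc x}. L (x div q)) = (\<Sum>q\<in>{1..x}. L (x div q))"
    by (simp add: L_0)
  also have "(\<Sum>q\<in>{1..Suc x}. (if q dvd Suc x then liouville (Suc x div q) else 0))
      = (\<Sum>q\<in>{q. q dvd Suc x}. liouville (Suc x div q))"
  proof -
    have eq: "{q\<in>{1..Suc x}. q dvd Suc x} = {q. q dvd Suc x}"
      using dvd_Suc_range by auto
    have "(\<Sum>q\<in>{1..Suc x}. (if q dvd Suc x then liouville (Suc x div q) else 0))
       = (\<Sum>q\<in>{q\<in>{1..Suc x}. q dvd Suc x}. liouville (Suc x div q))"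
      by (rule sum.inter_filter[symmetric]) simp
    then show ?thesis unfolding eq .
  qed
  also have "\<dots> = D (Suc x)" using D_alt[of "Suc x"] by simp
  finally show ?case using Suc by simp
qed


lemma Q_bounds: "0 \<le> (\<Sum>j\<in>{1..x}. D j) \<and> (\<Sum>j\<in>{1..x}. D j) \<le> int x"
proof -
  have h: "0 \<le> D j \<and> D j \<le> 1" if "j \<in> {1..x}" for j
  proof -
    have "j > 0" using that by simp
    then have "D j = 0 \<or> D j = 1" by (rule D_01)
    then show ?thesis by auto
  qed
  have "(\<Sum>j\<in>{1..x}. D j) \<le> (\<Sum>j\<in>{1..x}. 1)"
    by (rule sum_mono) (use h in blast)
  moreover have "0 \<le> (\<Sum>j\<in>{1..x}. D j)"
    by (rule sum_nonneg) (use h in blast)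
  ultimately show ?thesis by simp
qed

lemma abs_L: "\<bar>L y\<bar> \<le> int y"
proof -
  have "\<bar>L y\<bar> \<le> (\<Sum>n\<in>{1..y}. \<bar>liouville n\<bar>)" unfolding L_def by (rule sum_abs)
  also have "\<dots> = (\<Sum>n\<in>{1..y}. 1)"
  proof (rule sum.cong[OF refl])
    fix n
    show "\<bar>liouville n\<bar> = 1" using lam_pm[of n] by auto
  qed
  finally show ?thesis by simp
qed

lemma L_add: "L (y + k) = L y + (\<Sum>i<k. liouville (Suc y + i))"
  by (induction k) (simp_all add: L_Suc)

lemma even_sum:
  fixes f :: "nat \<Rightarrow> int" and n :: nat
  assumes "\<forall>i. odd (f i)"
  shows "even (\<Sum>i<n. f i) = even n"
  using assms by (induction n) auto

lemma sign_prop: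
  fixes T :: "nat \<Rightarrow> int"
  assumes "\<forall>m\<ge>N. T m \<noteq> 0 \<and> even (T m) \<and> \<bar>T (Suc m) - T m\<bar> \<le> 2"
  shows "(\<forall>m\<ge>N. T m > 0) \<or> (\<forall>m\<ge>N. T m < 0)"
proof (cases "T N > 0")
  case True
  have "T m > 0" if "m \<ge> N" for m
    using that
  proof (induction m rule: dec_induct)
    case base then show ?case using True .
  next
    case (step m)
    have "T m \<noteq> 1" using assms step by (metis odd_one)
    then have "T m \<ge> 2" using step by simp
    moreover have "\<bar>T (Suc m) - T m\<bar> \<le> 2" "T (Suc m) \<noteq> 0" using assms step by auto
    ultimately show ?case by linarith
  qed
  then show ?thesis by blast
next
  case False
  then have N: "T N < 0" using assms by force
  have "T m < 0" if "m \<ge> N" for m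
    using that
  proof (induction m rule: dec_induct)
    case base then show ?case using N .
  next
    case (step m)
    have "T m \<noteq> -1" using assms step by (metis odd_one even_minus)
    then have "T m \<le> -2" using step by simp
    moreover have "\<bar>T (Suc m) - T m\<bar> \<le> 2" "T (Suc m) \<noteq> 0" using assms step by auto
    ultimately show ?case by linarith
  qed
  then show ?thesis by blast
qed

lemma L_lin:
  fixes e :: int
  assumes "k > 0" "\<forall>m\<ge>N. e * (\<Sum>i<k. liouville (m+i)) \<ge> 1" "\<bar>e\<bar> = 1"
  shows "\<forall>y. e * int k * L y - int y \<ge> - (int k + 1) * int (N + k)"
proof
  fix y
  show "e * int k * L y - int y \<ge> - (int k + 1) * int (N + k)"
  proof (induction y rule: less_induct)
    case (less y)
    show ?case
    proof (cases "y < N + k")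
      case True
      have "\<bar>e * int k * L y\<bar> \<le> int k * int y"
        using abs_L[of y] assms(3) by (simp add: abs_mult mult_left_mono)
      then have "e * int k * L y - int y \<ge> - (int k + 1) * int y" by (simp add: algebra_simps)
      moreover have "(int k + 1) * int y \<le> (int k + 1) * int (N + k)" using True by simp
      ultimately show ?thesis by linarith
    next
      case False
      define z where "z = y - k"
      have z: "y = z + k" "z \<ge> N" using False unfolding z_def by simp_all
      have "z < y" using z assms(1) by simp
      then have IH: "e * int k * L z - int z \<ge> - (int k + 1) * int (N + k)" using less by blast
      have "Suc z \<ge> N" using z(2) by simp
      then have "e * (\<Sum>i<k. liouville (Suc z + i)) \<ge> 1" using assms(2) by blast
      then have "int k * (e * (\<Sum>i<k. liouville (Suc z + i))) \<ge> int k * 1"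
        by (intro mult_left_mono) simp_all
      then have "e * int k * (\<Sum>i<k. liouville (Suc z + i)) \<ge> int k"
        by (simp add: ac_simps)
      moreover have "e * int k * L (z + k) = e * int k * L z + e * int k * (\<Sum>i<k. liouville (Suc z + i))"
        unfolding L_add by (simp only: distrib_left)
      moreover have "int (z + k) = int z + int k" by (rule of_nat_add)
      ultimately show ?thesis using IH unfolding z(1) by linarith
    qed
  qed
qed

lemma div_ge: "q > 0 \<Longrightarrow> real x / real q \<le> real (x div q) + 1"
proof -
  assume q: "q > 0"
  have a: "x div q * q + x mod q = x" by (rule div_mult_mod_eq)
  have b: "x mod q < q" using q by (rule mod_less_divisor)
  have "x < (x div q + 1) * q" unfolding distrib_right using a b by linarith
  then have "real x < real (x div q + 1) * real q" by (simp only: of_nat_mult[symmetric] of_nat_less_iff)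
  moreover have "real (x div q + 1) = real (x div q) + 1" by simp
  ultimately have "real x \<le> (real (x div q) + 1) * real q" by (metis less_imp_le)
  then show ?thesis using q by (simp add: pos_divide_le_eq)
qed

lemma harm_contra:
  fixes M :: nat
  assumes "\<forall>x\<ge>1. (\<Sum>q\<in>{1..x}. x div q) \<le> M * x"
  shows False
proof -
  have hb: "harm x \<le> real M + 1" if "x \<ge> 1" for x :: nat
  proof -
    have "real x * harm x = (\<Sum>q\<in>{1..x}. real x * inverse (real q))"
      unfolding harm_def by (rule sum_distrib_left)
    also have "\<dots> \<le> (\<Sum>q\<in>{1..x}. real (x div q) + 1)"
    proof (rule sum_mono)
      fix q assume "q \<in> {1..x}"
      then have "q > 0" by simp
      then show "real x * inverse (real q) \<le> real (x div q) + 1"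
        using div_ge[of q x] by (simp only: divide_inverse)
    qed
    also have "\<dots> = real (\<Sum>q\<in>{1..x}. x div q) + real x" by (simp add: sum.distrib)
    also have "\<dots> \<le> real (M * x) + real x"
      using assms that by (simp only: add_le_cancel_right of_nat_le_iff)
    finally have "real x * harm x \<le> real x * (real M + 1)" by (simp add: algebra_simps)
    then show ?thesis using that by simp
  qed
  have "eventually (\<lambda>n. harm n > real M + 1) sequentially"
    using harm_at_top unfolding filterlim_at_top_dense by blast
  then obtain n0 where "\<forall>n\<ge>n0. harm n > real M + 1" by (auto simp: eventually_sequentially)
  then have "harm (n0 + 1) > real M + 1" by simp
  with hb[of "n0+1"] show False by simp
qed


theorem corollary5p2:
  fixes k d :: nat
  assumes "even k" and "k \<ge> 2" and "d \<ge> 1"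
  shows "infinite {a :: nat. a \<ge> 1 \<and> (\<Sum>i<k. liouville (a + i * d)) = 0}"
proof
  define A where "A = {a :: nat. a \<ge> 1 \<and> (\<Sum>i<k. liouville (a + i * d)) = 0}"
  assume "finite {a :: nat. a \<ge> 1 \<and> (\<Sum>i<k. liouville (a + i * d)) = 0}"
  then have "finite A" unfolding A_def .
  then obtain B where B: "\<forall>a\<in>A. a \<le> B" using finite_nat_set_iff_bounded_le by blast
  define T where "T m = (\<Sum>i<k. liouville (m+i))" for m
  define N where "N = B + 1"
  have kpos: "k > 0" using assms(2) by simp
  have Tnz: "T m \<noteq> 0" if "m \<ge> N" for m
  proof
    assume T0: "T m = 0"
    have "(\<Sum>i<k. liouville (d*m + i * d)) = (\<Sum>i<k. liouville d * liouville (m+i))"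
    proof (intro sum.cong refl)
      fix i
      have "d*m + i*d = d*(m+i)" by (simp add: algebra_simps)
      then show "liouville (d*m + i * d) = liouville d * liouville (m+i)"
        using lam_mult[of d "m+i"] assms(3) that N_def by simp
    qed
    also have "\<dots> = liouville d * T m" by (simp add: T_def sum_distrib_left)
    finally have s0: "(\<Sum>i<k. liouville (d*m + i * d)) = 0" using T0 by simp
    have m1: "m \<ge> 1" using that N_def by simp
    have "1 * 1 \<le> d * m" by (rule mult_le_mono[OF assms(3) m1])
    then have inA: "d*m \<in> A" unfolding A_def using s0 by simp
    have "1 * m \<le> d * m" by (rule mult_le_mono1[OF assms(3)])
    then have "d*m > B" using that N_def by linarith
    with inA
    show False using B by force
  qed
  have Tev: "even (T m)" for m
  proof -
    have "\<forall>i. odd (liouville (m+i))" using lam_pm by (metis odd_one even_minus)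
    then show ?thesis unfolding T_def using even_sum[of "\<lambda>i. liouville (m+i)" k] assms(1) by simp
  qed
  have Tstep: "\<bar>T (Suc m) - T m\<bar> \<le> 2" for m
  proof -
    have "(\<Sum>i<Suc k. liouville (m+i)) = liouville (m+0) + (\<Sum>i<k. liouville (m + Suc i))"
      by (rule sum.lessThan_Suc_shift)
    then have "T (Suc m) = T m + liouville (m+k) - liouville m" unfolding T_def by simp
    then show ?thesis using lam_pm[of "m+k"] lam_pm[of m] by auto
  qed
  obtain e :: int where e: "\<bar>e\<bar> = 1" "\<forall>m\<ge>N. e * T m \<ge> 1"
  proof -
    have "(\<forall>m\<ge>N. T m > 0) \<or> (\<forall>m\<ge>N. T m < 0)"
      using sign_prop[of N T] Tnz Tev Tstep by blast
    then show ?thesis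
    proof
      assume "\<forall>m\<ge>N. T m > 0" then show ?thesis by (intro that[of 1]) auto
    next
      assume "\<forall>m\<ge>N. T m < 0" then show ?thesis by (intro that[of "-1"]) auto
    qed
  qed
  define C where "C = (int k + 1) * int (N + k)"
  have Lb: "\<forall>y. e * int k * L y - int y \<ge> - C"
    unfolding C_def using L_lin[OF kpos _ e(1), of N] e(2) unfolding T_def by (metis minus_mult_left)
  have "(\<Sum>q\<in>{1..x}. x div q) \<le> (k + nat C) * x" if "x \<ge> 1" for x
  proof -
    have "e * int k * (\<Sum>j\<in>{1..x}. D j) = (\<Sum>q\<in>{1..x}. e * int k * L (x div q))"
      unfolding ident[symmetric] by (rule sum_distrib_left)
    also have "\<dots> \<ge> (\<Sum>q\<in>{1..x}. int (x div q) - C)"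
    proof (rule sum_mono)
      fix q show "int (x div q) - C \<le> e * int k * L (x div q)" using Lb[rule_format, of "x div q"] by linarith
    qed
    finally have "(\<Sum>q\<in>{1..x}. int (x div q)) - C * int x \<le> e * int k * (\<Sum>j\<in>{1..x}. D j)"
      by (simp add: sum_subtractf mult.commute)
    moreover have "e * int k * (\<Sum>j\<in>{1..x}. D j) \<le> int k * int x"
    proof -
      have "e * int k * (\<Sum>j\<in>{1..x}. D j) \<le> \<bar>e * int k * (\<Sum>j\<in>{1..x}. D j)\<bar>" by simp
      also have "\<dots> = int k * (\<Sum>j\<in>{1..x}. D j)" using e(1) Q_bounds[of x] by (simp add: abs_mult)
      also have "\<dots> \<le> int k * int x" using Q_bounds[of x] by (simp add: mult_left_mono)
      finally show ?thesis .
    qed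
    ultimately have "int (\<Sum>q\<in>{1..x}. x div q) \<le> (int k + C) * int x"
      by (simp add: algebra_simps)
    moreover have "C \<ge> 0" unfolding C_def by simp
    ultimately have "int (\<Sum>q\<in>{1..x}. x div q) \<le> int ((k + nat C) * x)" by simp
    then show ?thesis by (simp only: of_nat_le_iff)
  qed
  then show False using harm_contra[of "k + nat C"] by blast
qed

end
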